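(* Let $X$ be a finite two-wide poset and let $w,y\in X$ with $w<y$ and $w\not\prec y$. Then there exist elements $x,\tilde x\in X$ with $x\neq\tilde x$, $w\prec x<y$ and $w\prec\tilde x<y$.
   Context: In a poset, write $a\prec b$ if $a<b$ and there is no $c$ with $a<c<b$. A poset $X$ is two-wide if for any $x,z,y\in X$ with $x\prec z\prec y$ there exists $z'\in X$, $z'\neq z$, with $x\prec z'\prec y$. *)

theory Defs
  imports Main
begin

definition covers :: "'a::order \<Rightarrow> 'a \<Rightarrow> bool" (infix "\<prec>\<^sub>c" 50) where
  "a \<prec>\<^sub>c b \<longleftrightarrow> a < b \<and> \<not> (\<exists>c. a < c \<and> c < b)"

definition two_wide :: "'a::order itself \<Rightarrow> bool" where
  "two_wide _ \<longleftrightarrow> (\<forall>x z y::'a. x \<prec>\<^sub>c z \<and> z \<prec>\<^sub>c y \<longrightarrow>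
      (\<exists>z'. z' \<noteq> z \<and> x \<prec>\<^sub>c z' \<and> z' \<prec>\<^sub>c y))"

end

theory Submission
  imports Defs
begin

lemma cover_below:
  fixes a b :: "'a::{order, finite}"
  assumes "a < b"
  shows "\<exists>c. a \<prec>\<^sub>c c \<and> c \<le> b"
proof -
  define S where "S = {c. a < c \<and> c \<le> b}"
  have fin: "finite S" by simp
  have ne: "b \<in> S" using assms unfolding S_def by simp
  obtain m where m1: "m \<in> S" and m2: "\<And>d. d \<in> S \<Longrightarrow> d \<le> m \<Longrightarrow> m = d"
    using finite_has_minimal[OF fin] ne by blast
  have am: "a < m" and mb: "m \<le> b" using m1 unfolding S_def by simp_all
  have "\<not> (\<exists>d. a < d \<and> d < m)"
  proof
    assume "\<exists>d. a < d \<and> d < m"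
    then obtain d where d: "a < d" "d < m" by blast
    have "d \<in> S" unfolding S_def using d mb by simp
    then have "m = d" using m2 d(2) by simp
    then show False using d(2) by simp
  qed
  then have "a \<prec>\<^sub>c m" unfolding covers_def using am by simp
  then show ?thesis using mb by blast
qed

theorem mainTheorem4:
  fixes w y :: "'a::{order, finite}"
  assumes "two_wide TYPE('a)"
    and "w < y"
    and "\<not> (w \<prec>\<^sub>c y)"
  shows "\<exists>x x'. x \<noteq> x' \<and> w \<prec>\<^sub>c x \<and> x < y \<and> w \<prec>\<^sub>c x' \<and> x' < y"
proof -
  have "\<exists>c. w < c \<and> c < y" using assms(2,3) unfolding covers_def by simp
  then obtain c where c1: "w < c" and c2: "c < y" by blast
  obtain x where x1: "w \<prec>\<^sub>c x" and x2: "x \<le> c" using cover_below[OF c1] by blast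
  have xy: "x < y" using x2 c2 by (rule le_less_trans)
  obtain z where z1: "x \<prec>\<^sub>c z" and z2: "z \<le> y" using cover_below[OF xy] by blast
  have tw: "\<And>a b d::'a. a \<prec>\<^sub>c b \<Longrightarrow> b \<prec>\<^sub>c d \<Longrightarrow> \<exists>z'. z' \<noteq> b \<and> a \<prec>\<^sub>c z' \<and> z' \<prec>\<^sub>c d"
    using assms(1) unfolding two_wide_def by blast
  obtain x' where x'1: "x' \<noteq> x" and x'2: "w \<prec>\<^sub>c x'" and x'3: "x' \<prec>\<^sub>c z"
    using tw[OF x1 z1] by blast
  have "x' < z" using x'3 unfolding covers_def by simp
  then have x'y: "x' < y" using z2 by (rule less_le_trans)
  show ?thesis
    apply (rule exI[of _ x], rule exI[of _ x'])
    using x'1 x1 xy x'2 x'y by simp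
qed

end
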